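(* For every pair of integers $r,k\geq2$ with $(r,k)\neq(2,2)$, $$\frac{k\,p_{r,k}(k)\cdot\alpha}{r\beta}=\frac{1}{(r-1)(k-1)}.$$
   Context: $f_t(\mu)=e^{-\mu}\sum_{i\geq t}\mu^i/i!$. $\mu_{r,k}$ is the unique minimizer over $\mu>0$ of $\mu/f_{k-1}(\mu)^{r-1}$. $\alpha=f_k(\mu_{r,k})$, $\beta=\frac1r\mu_{r,k}f_{k-1}(\mu_{r,k})$, and $p_{r,k}(k)=e^{-\mu_{r,k}}\frac{\mu_{r,k}^k}{f_k(\mu_{r,k})\,k!}$. *)

theory Defs
  imports Complex_Main
begin

definition ftail :: "nat \<Rightarrow> real \<Rightarrow> real" where
  "ftail t \<mu> = exp (- \<mu>) * (\<Sum>i. if t \<le> i then \<mu> ^ i / fact i else 0)"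

definition mu_rk :: "nat \<Rightarrow> nat \<Rightarrow> real" where
  "mu_rk r k = (THE \<mu>. 0 < \<mu> \<and>
      (\<forall>\<nu>>0. \<mu> / ftail (k - 1) \<mu> ^ (r - 1) \<le> \<nu> / ftail (k - 1) \<nu> ^ (r - 1)))"

definition alpha_rk :: "nat \<Rightarrow> nat \<Rightarrow> real" where
  "alpha_rk r k = ftail k (mu_rk r k)"

definition beta_rk :: "nat \<Rightarrow> nat \<Rightarrow> real" where
  "beta_rk r k = (1 / real r) * mu_rk r k * ftail (k - 1) (mu_rk r k)"

definition p_rk :: "nat \<Rightarrow> nat \<Rightarrow> nat \<Rightarrow> real" where
  "p_rk r k j = exp (- mu_rk r k) * mu_rk r k ^ j / (ftail k (mu_rk r k) * fact j)"

end

theory Submission imports Defs begin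

lemma ftail_sums: fixes x :: real shows "(\<lambda>i. if t \<le> i then x^i/fact i else 0) sums (exp x - (\<Sum>i<t. x^i/fact i))"
proof -
  have 1: "(\<lambda>i. x^i/fact i) sums exp x" using exp_converges[of x]
    by (simp add: field_simps)
  have 2: "(\<lambda>i. if i \<in> {..<t} then x^i/fact i else 0) sums (\<Sum>i<t. x^i/fact i)"
    by (rule sums_If_finite_set) simp
  have 3: "(\<lambda>i. x^i/fact i - (if i \<in> {..<t} then x^i/fact i else 0)) sums (exp x - (\<Sum>i<t. x^i/fact i))"
    by (rule sums_diff[OF 1 2])
  have "(\<lambda>i. x^i/fact i - (if i \<in> {..<t} then x^i/fact i else 0)) = (\<lambda>i. if t \<le> i then x^i/fact i else 0)"
    by (auto simp: fun_eq_iff)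
  with 3 show ?thesis by simp
qed

lemma ftail_closed: "ftail t x = 1 - exp(-x) * (\<Sum>i<t. x^i/fact i)"
  unfolding ftail_def sums_unique[OF ftail_sums, symmetric]
  by (simp add: right_diff_distrib exp_minus field_simps)

lemma shift_sums: fixes x :: real shows "(\<lambda>j. x^(j+t)/fact (j+t)) sums (exp x - (\<Sum>i<t. x^i/fact i))"
proof -
  have "(\<lambda>j. (\<lambda>i. if t \<le> i then x^i/fact i else 0) (j+t)) sums (exp x - (\<Sum>i<t. x^i/fact i))"
    by (subst sums_zero_iff_shift) (auto intro: ftail_sums)
  then show ?thesis by simp
qed

definition phi :: "nat \<Rightarrow> real \<Rightarrow> real" where
  "phi t x = (\<Sum>j. fact t / fact (j+t) * x^j)"

lemma phi_sums:
  fixes x :: real assumes "x > 0"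
  shows "(\<lambda>j. fact t / fact (j+t) * x^j) sums (fact t / x^t * (exp x - (\<Sum>i<t. x^i/fact i)))"
proof -
  have "(\<lambda>j. fact t / x^t * (x^(j+t)/fact (j+t))) sums (fact t / x^t * (exp x - (\<Sum>i<t. x^i/fact i)))"
    by (rule sums_mult[OF shift_sums])
  moreover have "(\<lambda>j. fact t / x^t * (x^(j+t)/fact (j+t))) = (\<lambda>j. fact t / fact (j+t) * x^j)"
    using assms by (simp add: fun_eq_iff power_add field_simps)
  ultimately show ?thesis by simp
qed

lemma ftail_phi:
  assumes "x > 0"
  shows "ftail t x = exp (-x) * x^t / fact t * phi t x"
proof -
  have 1: "ftail t x = exp (-x) * (exp x - (\<Sum>i<t. x^i/fact i))"
    unfolding ftail_def sums_unique[OF ftail_sums, symmetric] ..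
  have 2: "phi t x = fact t / x^t * (exp x - (\<Sum>i<t. x^i/fact i))"
    unfolding phi_def using sums_unique[OF phi_sums[OF assms]] by simp
  have g: "\<And>E a b S::real. a \<noteq> 0 \<Longrightarrow> b \<noteq> 0 \<Longrightarrow> E * a / b * (b / a * S) = E * S"
    by simp
  show ?thesis unfolding 1 2 by (rule g[symmetric]) (use assms in auto)
qed

lemma phi_summable: "(x::real) > 0 \<Longrightarrow> summable (\<lambda>j. fact t / fact (j+t) * x^j)"
  using phi_sums sums_summable by blast

lemma phi_lower:
  assumes "x > 0" shows "1 + x / (real t + 1) \<le> phi t x"
proof -
  have "(\<Sum>j\<in>{..<2}. fact t / fact (j+t) * x^j) \<le> phi t x"
    unfolding phi_def
  proof (rule sum_le_suminf[OF phi_summable[OF assms]])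
    show "finite {..<2::nat}" by simp
    show "0 \<le> fact t / fact (n+t) * x^n" for n
      using assms by (intro mult_nonneg_nonneg divide_nonneg_nonneg) auto
  qed
  moreover have "(\<Sum>j\<in>{..<2::nat}. fact t / fact (j+t) * x^j) = 1 + fact t / fact (Suc t) * x"
    by (simp add: numeral_2_eq_2 del: fact_Suc)
  moreover have "(fact t :: real) / fact (Suc t) * x = x / (real t + 1)"
  proof -
    have g: "\<And>F c x::real. F \<noteq> 0 \<Longrightarrow> F / (c * F) * x = x / c" by simp
    have "(fact (Suc t)::real) = (real t + 1) * fact t" by (simp add: algebra_simps)
    then show ?thesis using g[of "fact t" "real t + 1" x] by simp
  qed
  ultimately show ?thesis by (simp only: add.commute)
qed

lemma fact_le_aux: "fact t * fact j \<le> (fact (j+t) :: nat)"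
proof -
  have "fact t * fact (j+t-t) * ((j+t) choose t) = (fact (j+t)::nat)"
    by (rule binomial_fact_lemma) simp
  moreover have "(j+t) choose t > 0" by simp
  ultimately show ?thesis
  proof -
    have le: "fact t * fact j \<le> fact t * fact j * ((j+t) choose t)"
      using \<open>(j+t) choose t > 0\<close> by (simp add: Suc_le_eq)
    have eq2: "fact t * fact j * ((j+t) choose t) = (fact (j+t)::nat)"
      using \<open>fact t * fact (j+t-t) * ((j+t) choose t) = (fact (j+t)::nat)\<close> by simp
    show ?thesis using le eq2 by linarith
  qed
qed

lemma phi_upper:
  assumes "x > 0" shows "phi t x \<le> exp x"
proof -
  have 1: "(\<lambda>i. x^i/fact i) sums exp x" using exp_converges[of x]
    by (simp add: field_simps)
  have "fact t / fact (j+t) \<le> (1 / fact j :: real)" for j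
  proof -
    have "real (fact t * fact j) \<le> real (fact (j+t))" using fact_le_aux[of t j] by linarith
    then have "fact t * fact j \<le> (fact (j+t) :: real)" by (simp add: of_nat_fact)
    then show ?thesis by (simp add: field_simps)
  qed
  then have "fact t / fact (j+t) * x^j \<le> x^j / fact j" for j
    using assms mult_right_mono[of "fact t / fact (j+t)" "1 / fact j" "x^j"] by simp
  then have "phi t x \<le> (\<Sum>j. x^j/fact j)"
    unfolding phi_def using assms by (intro suminf_le phi_summable sums_summable[OF 1]) auto
  then show ?thesis using sums_unique[OF 1] by simp
qed

lemma phi_strict:
  assumes "0 < x" "x < y" shows "phi t x < phi t y"
proof -
  have "0 < (\<Sum>j. fact t / fact (j+t) * y^j - fact t / fact (j+t) * x^j)"
  proof (rule suminf_pos2[where i=1])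
    show "summable (\<lambda>j. fact t / fact (j+t) * y^j - fact t / fact (j+t) * x^j)"
      using assms by (intro summable_diff phi_summable) auto
    show "0 \<le> fact t / fact (j+t) * y^j - fact t / fact (j+t) * x^j" for j
      using assms by (auto intro!: divide_right_mono mult_left_mono power_mono)
    show "0 < fact t / fact (1+t) * y^1 - fact t / fact (1+t) * x^1"
    proof -
      show ?thesis using assms
        by (simp del: fact_Suc) (intro divide_strict_right_mono mult_strict_left_mono; simp del: fact_Suc)
    qed
  qed
  also have "\<dots> = phi t y - phi t x"
    unfolding phi_def using assms by (intro suminf_diff[symmetric] phi_summable) auto
  finally show ?thesis by simp
qed


lemma E_deriv:
  "((\<lambda>y. exp(-y) * (\<Sum>i<Suc m. y^i/fact i)) has_real_derivative (- exp(-x) * x^m / fact m)) (at x)"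
proof (induction m)
  case 0
  show ?case by (auto intro!: derivative_eq_intros)
next
  case (Suc m)
  have eq: "(\<lambda>y. exp(-y) * (\<Sum>i<Suc (Suc m). y^i/fact i)) =
     (\<lambda>y. exp(-y) * (\<Sum>i<Suc m. y^i/fact i) + exp(-y) * (y^Suc m / fact (Suc m)))"
    by (simp add: fun_eq_iff algebra_simps)
  have "((\<lambda>y. exp(-y) * (\<Sum>i<Suc m. y^i/fact i) + exp(-y) * (y^Suc m / fact (Suc m)))
     has_real_derivative (- exp(-x) * x^m / fact m) + ((- exp(-x)) * (x^Suc m / fact (Suc m))
        + exp(-x) * (real (Suc m) * x^m / fact (Suc m)))) (at x)"
  proof -
    have e1: "real (Suc m) * x ^ (Suc m - Suc 0) / fact (Suc m) = real (Suc m) * x^m / fact (Suc m)"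
      by simp
    have d1: "((\<lambda>y. y^Suc m / fact (Suc m)) has_real_derivative real (Suc m) * x^m / fact (Suc m)) (at x)"
      using DERIV_cdivide[OF DERIV_pow[of "Suc m" x], of "fact (Suc m)"] unfolding e1 .
    have d2: "((\<lambda>y. exp(-y)) has_real_derivative - exp(-x)) (at x)"
      by (auto intro!: derivative_eq_intros)
    show ?thesis
      using DERIV_add[OF Suc.IH DERIV_mult[OF d2 d1]] by simp
  qed
  moreover have "(- exp(-x) * x^m / fact m) + ((- exp(-x)) * (x^Suc m / fact (Suc m))
        + exp(-x) * (real (Suc m) * x^m / fact (Suc m))) = - exp(-x) * x^Suc m / fact (Suc m)"
  proof -
    have a: "(fact (Suc m)::real) = (1 + real m) * fact m" by simp
    have b: "(1 + real m) * (fact m::real) \<noteq> 0" proof -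
      have "(1 + real m) * (fact m::real) > 0" by (intro mult_pos_pos) auto
      then show ?thesis by simp
    qed
    have h: "\<And>E a b c F::real. c * F \<noteq> 0 \<Longrightarrow> - E * a / F + ((- E) * (b / (c*F)) + E * (c * a / (c * F))) = - E * b / (c * F)"
      by (simp add: field_simps)
    show ?thesis unfolding a of_nat_Suc using h[OF b, of "exp (-x)" "x^m" "x^Suc m"] by (simp add: add.commute)
  qed
  ultimately show ?case unfolding eq by simp
qed

lemma ftail_deriv:
  "(ftail (Suc m) has_real_derivative (exp(-x) * x^m / fact m)) (at x)"
proof -
  have eq: "ftail (Suc m) = (\<lambda>y. 1 - exp(-y) * (\<Sum>i<Suc m. y^i/fact i))"
    by (simp add: fun_eq_iff ftail_closed)
  show ?thesis unfolding eq
    using DERIV_diff[OF DERIV_const E_deriv[of m x]] by simp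
qed

lemma ftail_pos: "x > 0 \<Longrightarrow> ftail t x > 0"
proof -
  assume x: "x > 0"
  have "phi t x \<ge> 1" proof -
    have "x / (real t + 1) \<ge> 0" using x by simp
    then show ?thesis using phi_lower[OF x, of t] by linarith
  qed
  then show ?thesis using x by (simp add: ftail_phi)
qed


lemma mu_char:
  assumes nm: "\<not> (n = 0 \<and> m = 0)"
  shows "mu_rk (Suc (Suc n)) (Suc (Suc m)) > 0 \<and>
    ftail (Suc m) (mu_rk (Suc (Suc n)) (Suc (Suc m))) =
      real (Suc n) * mu_rk (Suc (Suc n)) (Suc (Suc m)) *
        (exp (- mu_rk (Suc (Suc n)) (Suc (Suc m))) * mu_rk (Suc (Suc n)) (Suc (Suc m)) ^ m / fact m)"
proof -
  define F where "F = ftail (Suc m)"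
  define dF where "dF x = exp(-x)*x^m/fact m" for x :: real
  define H where "H x = F x - real (Suc n) * x * dF x" for x
  define g where "g x = x / F x ^ Suc n" for x
  define st where "st = real (Suc n) * real (Suc m)"
  have "Suc n * Suc m \<ge> 2" using nm by (cases n; cases m; simp)
  then have "real (Suc n * Suc m) \<ge> 2" by (metis of_nat_le_iff of_nat_numeral)
  then have st2: "st \<ge> 2" unfolding st_def by (simp only: of_nat_mult)
  have Fd: "(F has_real_derivative dF x) (at x)" for x
    unfolding F_def dF_def by (rule ftail_deriv)
  have Fpos: "x > 0 \<Longrightarrow> F x > 0" for x unfolding F_def by (rule ftail_pos)
  have hl: "\<And>E y a c fm p s::real. c * fm \<noteq> 0 \<Longrightarrow>
      E * (y * a) / (c * fm) * p - s * y * (E * a / fm) = E * (y * a) / (c * fm) * (p - s * c)"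
    by (simp add: field_simps)
  have H_phi: "H x = exp(-x) * x^Suc m / fact (Suc m) * (phi (Suc m) x - st)" if x: "x > 0" for x
  proof -
    have a: "(fact (Suc m)::real) = (1 + real m) * fact m" by simp
    have b: "(1 + real m) * (fact m::real) \<noteq> 0" proof -
      have "(1 + real m) * (fact m::real) > 0" by (intro mult_pos_pos) auto
      then show ?thesis by simp
    qed
    show ?thesis unfolding H_def F_def ftail_phi[OF x] dF_def st_def a
      using hl[OF b, of "exp (-x)" x "x^m" "phi (Suc m) x" "real (Suc n)"] by (simp add: add.commute)
  qed
  have pref: "exp(-x) * x^Suc m / fact (Suc m) > 0" if "x > 0" for x :: real
    using that by simp
  have FC: "isCont F x" for x using DERIV_isCont[OF Fd] .
  have HC1: "isCont H x" for x
    unfolding H_def[abs_def] dF_def[abs_def] by (intro continuous_intros FC) simp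
  have HC: "continuous_on S H" for S
    by (intro continuous_at_imp_continuous_on ballI HC1)
  define a :: real where "a = ln (3/2)"
  define b where "b = st * (real (Suc m) + 1)"
  have a0: "a > 0" unfolding a_def by (rule ln_gt_zero) simp
  have "a \<le> 3/2 - 1" unfolding a_def by (rule ln_le_minus_one) simp
  moreover have "b \<ge> 2" unfolding b_def using st2 by (smt (verit) mult_le_cancel_left1 of_nat_0_le_iff)
  ultimately have ab: "a \<le> b" by simp
  have Ha: "H a \<le> 0"
  proof -
    have "phi (Suc m) a \<le> exp a" using phi_upper[OF a0] .
    also have "exp a = 3/2" unfolding a_def by simp
    finally have "phi (Suc m) a - st \<le> 0" using st2 by simp
    then show ?thesis unfolding H_phi[OF a0] using mult_nonneg_nonpos[OF less_imp_le[OF pref[OF a0]]] by blast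
  qed
  have b0: "b > 0" using \<open>b \<ge> 2\<close> by simp
  have Hb: "H b \<ge> 0"
  proof -
    have "1 + b / (real (Suc m) + 1) \<le> phi (Suc m) b" using phi_lower[OF b0] .
    moreover have "b / (real (Suc m) + 1) = st" unfolding b_def by simp
    ultimately have "phi (Suc m) b - st \<ge> 0" by simp
    then show ?thesis unfolding H_phi[OF b0] using mult_nonneg_nonneg[OF less_imp_le[OF pref[OF b0]]] by blast
  qed
  obtain c where c: "a \<le> c" "c \<le> b" "H c = 0" using IVT'[of H a 0 b, OF Ha Hb ab HC] by blast
  have c0: "c > 0" using a0 c by simp
  have phic: "phi (Suc m) c = st" using H_phi[OF c0] c(3) pref[OF c0] using c0 by simp
  have Hneg: "H z < 0" if "0 < z" "z < c" for z
  proof -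
    have "phi (Suc m) z < phi (Suc m) c" by (rule phi_strict) (use that in auto)
    then have "phi (Suc m) z - st < 0" using phic by simp
    then show ?thesis unfolding H_phi[OF that(1)] using mult_pos_neg[OF pref[OF that(1)]] by blast
  qed
  have Hpos: "H z > 0" if "c < z" for z
  proof -
    have z0: "z > 0" using that c0 by simp
    have "phi (Suc m) c < phi (Suc m) z" by (rule phi_strict) (use that c0 in auto)
    then have "phi (Suc m) z - st > 0" using phic by simp
    then show ?thesis unfolding H_phi[OF z0] using mult_pos_pos[OF pref[OF z0]] by blast
  qed
  have gd: "(g has_real_derivative F z ^ n * H z / (F z ^ Suc n)^2) (at z)" if z0: "z > 0" for z
  proof -
    have "F z ^ Suc n \<noteq> 0" using Fpos[OF z0] by simp
    from DERIV_divide[OF DERIV_ident DERIV_power[OF Fd] this]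
    have "((\<lambda>x. x / F x ^ Suc n) has_real_derivative
       (1 * F z ^ Suc n - z * (real (Suc n) * (dF z * F z ^ (Suc n - Suc 0)))) / (F z ^ Suc n * F z ^ Suc n)) (at z)" .
    moreover have "(1 * F z ^ Suc n - z * (real (Suc n) * (dF z * F z ^ (Suc n - Suc 0)))) / (F z ^ Suc n * F z ^ Suc n)
        = F z ^ n * H z / (F z ^ Suc n)^2"
      unfolding H_def by (simp add: power2_eq_square algebra_simps)
    ultimately show ?thesis unfolding g_def by simp
  qed
  have gC: "continuous_on {x..y} g" if "x > 0" for x y
    by (intro continuous_at_imp_continuous_on ballI DERIV_isCont[OF gd]) (use that in auto)
  have dec: "g y < g x" if "0 < x" "x < y" "y \<le> c" for x y
  proof (rule DERIV_neg_imp_decreasing_open[OF that(2) _ gC[OF that(1)]])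
    fix z assume z: "x < z" "z < y"
    then have z0: "z > 0" and zc: "z < c" using that by auto
    have "F z ^ n * H z / (F z ^ Suc n)^2 < 0"
      using Fpos[OF z0] Hneg[OF z0 zc] by (intro divide_neg_pos mult_pos_neg) auto
    then show "\<exists>y. (g has_real_derivative y) (at z) \<and> y < 0" using gd[OF z0] by blast
  qed
  have inc: "g x < g y" if "c \<le> x" "x < y" for x y
  proof (rule DERIV_pos_imp_increasing_open[OF that(2) _ gC])
    fix z assume z: "x < z" "z < y"
    then have z0: "z > 0" and zc: "c < z" using that c0 by auto
    have "F z ^ n * H z / (F z ^ Suc n)^2 > 0"
      using Fpos[OF z0] Hpos[OF zc] by (intro divide_pos_pos mult_pos_pos) auto
    then show "\<exists>y. (g has_real_derivative y) (at z) \<and> y > 0" using gd[OF z0] by blast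
  next
    show "x > 0" using that c0 by simp
  qed
  have strict: "g c < g v" if "v > 0" "v \<noteq> c" for v
  proof (cases "v < c")
    case True then show ?thesis using dec[OF that(1) True] by simp
  next
    case False then have "c < v" using that by simp
    then show ?thesis using inc[of c v] by simp
  qed
  have mu: "mu_rk (Suc (Suc n)) (Suc (Suc m)) = c"
    unfolding mu_rk_def diff_Suc_1
  proof (rule the_equality)
    show "0 < c \<and> (\<forall>\<nu>>0. c / ftail (Suc m) c ^ Suc n \<le> \<nu> / ftail (Suc m) \<nu> ^ Suc n)"
    proof -
      have "g c \<le> g v" if "v > 0" for v using strict[OF that] by (cases "v = c") auto
      then show ?thesis using c0 unfolding g_def F_def by auto
    qed
  next
    fix u assume u: "0 < u \<and> (\<forall>\<nu>>0. u / ftail (Suc m) u ^ Suc n \<le> \<nu> / ftail (Suc m) \<nu> ^ Suc n)"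
    show "u = c"
    proof (rule ccontr)
      assume "u \<noteq> c"
      then have "g c < g u" using strict u by blast
      moreover have "g u \<le> g c" using u c0 unfolding g_def F_def by simp
      ultimately show False by simp
    qed
  qed
  show ?thesis unfolding mu using c0 c(3) unfolding H_def F_def dF_def by simp
qed


lemma alg_final:
  fixes A e u p f N M :: real
  assumes "A > 0" "e > 0" "u > 0" "p > 0" "f > 0" "N > 0" "M > 0"
  shows "(M + 1) * (e * (u * (u * p)) / (A * ((M + 1) * (M * f)))) * A /
     ((N + 1) * (1 / (N + 1) * u * ((N * u) * (e * p / f)))) = 1 / (N * M)"
proof -
  have h: "M + 1 \<noteq> 0" "N + 1 \<noteq> 0" using assms by auto
  have "(N + 1) * (1 / (N + 1) * u * ((N * u) * (e * p / f))) = u * ((N * u) * (e * p / f))"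
    using h by simp
  moreover have "(M + 1) * (e * (u * (u * p)) / (A * ((M + 1) * (M * f)))) * A = e * (u * (u * p)) / (M * f)"
  proof -
    have g: "\<And>c X D. c \<noteq> 0 \<Longrightarrow> c * (X / (A * (c * D))) * A = X / D" using assms by (simp add: field_simps)
    show ?thesis by (rule g) (use h in auto)
  qed
  moreover have "e * (u * (u * p)) / (M * f) / (u * ((N * u) * (e * p / f))) = 1 / (N * M)"
    using assms by (simp add: field_simps)
  ultimately show ?thesis by simp
qed

theorem lemma40:
  fixes r k :: nat
  assumes "r \<ge> 2" and "k \<ge> 2" and "(r, k) \<noteq> (2, 2)"
  shows "real k * p_rk r k k * alpha_rk r k / (real r * beta_rk r k)
           = 1 / ((real r - 1) * (real k - 1))"
proof -
  obtain n where n: "r = Suc (Suc n)" using assms(1) by (metis add_2_eq_Suc le_Suc_ex)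
  obtain m where m: "k = Suc (Suc m)" using assms(2) by (metis add_2_eq_Suc le_Suc_ex)
  have nm: "\<not> (n = 0 \<and> m = 0)" using assms(3) n m by auto
  define u where "u = mu_rk r k"
  have u0: "u > 0" and B: "ftail (Suc m) u = real (Suc n) * u * (exp (- u) * u ^ m / fact m)"
    using mu_char[OF nm] unfolding u_def n m by auto
  have A0: "ftail k u > 0" using ftail_pos[OF u0] .
  have fk: "(fact k :: real) = (real (Suc m) + 1) * (real (Suc m) * fact m)"
    unfolding m by (simp add: algebra_simps)
  have uk: "u ^ k = u * (u * u ^ m)" unfolding m by simp
  have "real k * p_rk r k k * alpha_rk r k / (real r * beta_rk r k)
     = (real (Suc m) + 1) * (exp (- u) * (u * (u * u ^ m)) / (ftail k u * ((real (Suc m) + 1) * (real (Suc m) * fact m)))) * ftail k u /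
     ((real (Suc n) + 1) * (1 / (real (Suc n) + 1) * u * ((real (Suc n) * u) * (exp (- u) * u ^ m / fact m))))"
    unfolding p_rk_def alpha_rk_def beta_rk_def u_def[symmetric] fk uk
    using B by (simp add: n m mult.assoc)
  also have "\<dots> = 1 / (real (Suc n) * real (Suc m))"
    by (rule alg_final) (use A0 u0 in auto)
  also have "\<dots> = 1 / ((real r - 1) * (real k - 1))" unfolding n m by simp
  finally show ?thesis .
qed

end
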